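(* Let $m\ge2$ and $G=CK(2m-1)$. There exists a set $B$ of $m$ edges of $G$ that has an edge in common with every simple Hamiltonian path of $G$.
   Context: $CK(2m-1)$ is the complete convex geometric graph on $2m-1$ points in convex position in the plane, labelled cyclically $0,\dots,2m-2$ (elements of $\mathbb{Z}_{2m-1}$), with all segments between vertices as edges. A simple Hamiltonian path is a path through all vertices whose edges pairwise do not cross. *)

theory Defs
  imports Main
begin

text \<open>The complete convex geometric graph CK(n): vertices 0,...,n-1 placed in
convex position in this cyclic order; every pair of distinct vertices is an edge
(an unordered pair, represented as a two-element set).\<close>

definition ck_edges :: "nat \<Rightarrow> nat set set" where
  "ck_edges n = {{a, b} | a b. a < n \<and> b < n \<and> a \<noteq> b}"

text \<open>For points in convex position, two segments cross iff their four
endpoints are distinct and interleave in the cyclic order, i.e. a < c < b < d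
after naming them suitably.\<close>

definition crosses :: "nat set \<Rightarrow> nat set \<Rightarrow> bool" where
  "crosses e f \<longleftrightarrow>
     (\<exists>a b c d. ((e = {a, b} \<and> f = {c, d}) \<or> (e = {c, d} \<and> f = {a, b}))
                 \<and> a < c \<and> c < b \<and> b < d)"

definition path_edges :: "nat list \<Rightarrow> nat set set" where
  "path_edges p = {{p ! i, p ! Suc i} | i. Suc i < length p}"

definition simple_ham_path :: "nat \<Rightarrow> nat list \<Rightarrow> bool" where
  "simple_ham_path n p \<longleftrightarrow>
     distinct p \<and> set p = {0..<n} \<and>
     (\<forall>e\<in>path_edges p. \<forall>f\<in>path_edges p. \<not> crosses e f)"

end

theory Submission
  imports Defs
begin

lemma edge_in: "Suc i < length p \<Longrightarrow> {p!i, p!Suc i} \<in> path_edges p"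
  unfolding path_edges_def by blast

lemma cross_wit: "(0::nat) < x \<Longrightarrow> x < a \<Longrightarrow> a < y \<Longrightarrow> crosses {0,a} {x,y}"
  unfolding crosses_def by blast

lemma len_sh: "simple_ham_path n p \<Longrightarrow> length p = n"
  unfolding simple_ham_path_def by (metis card_atLeastLessThan diff_zero distinct_card)

lemma block_const:
  assumes sh: "simple_ham_path n p" and "k < length p" and "j \<le> k"
  and "\<forall>t. j \<le> t \<and> t \<le> k \<longrightarrow> p!t \<notin> S"
  and sep: "\<And>x y. x \<notin> S \<Longrightarrow> y \<notin> S \<Longrightarrow> cls x \<noteq> cls y \<Longrightarrow> \<exists>e\<in>path_edges p. crosses e {x,y}"
  shows "cls (p!j) = cls (p!k)"
  using assms(2-4)
proof (induction k)
  case 0 then show ?case by simp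
next
  case (Suc k)
  show ?case
  proof (cases "j = Suc k")
    case True then show ?thesis by simp
  next
    case False
    then have jk: "j \<le> k" using Suc by simp
    have ih: "cls (p!j) = cls (p!k)" using Suc jk by simp
    have "cls (p!k) = cls (p!Suc k)"
    proof (rule ccontr)
      assume "cls (p!k) \<noteq> cls (p!Suc k)"
      moreover have "p!k \<notin> S" "p!Suc k \<notin> S" using Suc jk by auto
      ultimately obtain e where "e \<in> path_edges p" "crosses e {p!k, p!Suc k}" using sep by blast
      moreover have "{p!k, p!Suc k} \<in> path_edges p" using edge_in Suc by blast
      ultimately show False using sh unfolding simple_ham_path_def by blast
    qed
    then show ?thesis using ih by simp
  qed
qed

lemma block_eq:
  assumes sh: "simple_ham_path n p" and "hi < length p"
  and "lo \<le> t" "t \<le> hi" "lo \<le> t'" "t' \<le> hi"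
  and nS: "\<forall>s. lo \<le> s \<and> s \<le> hi \<longrightarrow> p!s \<notin> S"
  and sep: "\<And>x y. x \<notin> S \<Longrightarrow> y \<notin> S \<Longrightarrow> cls x \<noteq> cls y \<Longrightarrow> \<exists>e\<in>path_edges p. crosses e {x,y}"
  shows "cls (p!t) = cls (p!t')"
proof (cases "t \<le> t'")
  case True
  show ?thesis
    by (rule block_const[OF sh _ True _ sep]) (use assms in auto)
next
  case False
  then have "t' \<le> t" by simp
  have "cls (p!t') = cls (p!t)"
    by (rule block_const[OF sh _ \<open>t' \<le> t\<close> _ sep]) (use assms in auto)
  then show ?thesis by simp
qed

lemma pos_of:
  assumes "simple_ham_path n p" "v < n"
  obtains t where "t < length p" "p!t = v"
  using assms unfolding simple_ham_path_def by (metis atLeastLessThan_iff in_set_conv_nth zero_le)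

lemma endpoint_case:
  assumes sh: "simple_ham_path n p"
  and i: "i < n" "p!i = 0" and i': "i' < n" "p!i' = a"
  and edge: "{0,a} \<in> path_edges p"
  and reg: "\<forall>t<n. t \<noteq> i \<and> t \<noteq> i' \<longrightarrow> lo \<le> t \<and> t \<le> hi"
  and reg2: "\<forall>s. lo \<le> s \<and> s \<le> hi \<longrightarrow> s \<noteq> i \<and> s \<noteq> i'" and hi: "hi < n"
  and a: "2 \<le> a" "a + 2 \<le> n"
  shows False
proof -
  have len: "length p = n" using len_sh[OF sh] .
  have dist: "distinct p" using sh unfolding simple_ham_path_def by simp
  define S where "S = {0::nat, a}"
  define cls where "cls = (\<lambda>x::nat. x < a)"
  have sep: "\<exists>e\<in>path_edges p. crosses e {x,y}" if "x \<notin> S" "y \<notin> S" "cls x \<noteq> cls y" for x y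
  proof -
    have "x < a \<and> a < y \<or> y < a \<and> a < x" using that unfolding S_def cls_def by auto
    then show ?thesis
    proof
      assume "x < a \<and> a < y"
      then have "crosses {0,a} {x,y}" using that cross_wit unfolding S_def by auto
      then show ?thesis using edge by blast
    next
      assume "y < a \<and> a < x"
      then have "crosses {0,a} {y,x}" using that cross_wit unfolding S_def by auto
      then show ?thesis using edge by (metis insert_commute)
    qed
  qed
  have nS: "\<forall>s. lo \<le> s \<and> s \<le> hi \<longrightarrow> p!s \<notin> S"
  proof (intro allI impI)
    fix s assume s: "lo \<le> s \<and> s \<le> hi"
    then have "s \<noteq> i" "s \<noteq> i'" "s < n" using reg2 hi by auto
    then show "p!s \<notin> S" unfolding S_def using i i' dist len
      by (metis insertE empty_iff nth_eq_iff_index_eq)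
  qed
  obtain t1 where t1: "t1 < n" "p!t1 = 1" using pos_of[OF sh, of 1] a len by auto
  obtain t2 where t2: "t2 < n" "p!t2 = n - 1" using pos_of[OF sh, of "n-1"] a len by auto
  have "t1 \<noteq> i" "t1 \<noteq> i'" "t2 \<noteq> i" "t2 \<noteq> i'" using t1 t2 i i' a by auto
  then have r: "lo \<le> t1" "t1 \<le> hi" "lo \<le> t2" "t2 \<le> hi" using reg t1 t2 by auto
  have "cls (p!t1) = cls (p!t2)"
    by (rule block_eq[OF sh _ r nS sep]) (use hi len in auto)
  then show False using t1 t2 a unfolding cls_def by auto
qed

lemma interior_case:
  assumes sh: "simple_ham_path n p"
  and i: "0 < i" "Suc i < n" "p!i = 0"
  and ab: "{p!(i-1), p!Suc i} = {a,b}"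
  and a: "2 \<le> a" "a + 2 \<le> b" "b + 2 \<le> n"
  shows False
proof -
  have len: "length p = n" using len_sh[OF sh] .
  have dist: "distinct p" using sh unfolding simple_ham_path_def by simp
  have e1: "{p!(i-1), p!i} \<in> path_edges p" using edge_in[of "i-1" p] i len by simp
  have e2: "{p!i, p!Suc i} \<in> path_edges p" using edge_in[of i p] i len by simp
  have ea: "{0,a} \<in> path_edges p" and eb: "{0,b} \<in> path_edges p"
    using ab e1 e2 i(3) by (auto simp: doubleton_eq_iff insert_commute)
  define S where "S = {0::nat, a, b}"
  define cls where "cls = (\<lambda>x::nat. if x < a then 0::nat else if x < b then 1 else 2)"
  have sep0: "\<exists>e\<in>path_edges p. crosses e {x,y}" if "x \<notin> S" "y \<notin> S" "cls x \<noteq> cls y" "x < y" for x y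
  proof -
    have "x < a \<and> a < y \<or> a < x \<and> x < b \<and> b < y" using that unfolding S_def cls_def
      by (auto split: if_splits)
    then show ?thesis
    proof
      assume "x < a \<and> a < y"
      then have "crosses {0,a} {x,y}" using that cross_wit unfolding S_def by auto
      then show ?thesis using ea by blast
    next
      assume "a < x \<and> x < b \<and> b < y"
      then have "crosses {0,b} {x,y}" using that cross_wit unfolding S_def by auto
      then show ?thesis using eb by blast
    qed
  qed
  have sep: "\<exists>e\<in>path_edges p. crosses e {x,y}" if "x \<notin> S" "y \<notin> S" "cls x \<noteq> cls y" for x y
  proof (cases "x < y")
    case True then show ?thesis using sep0 that by blast
  next
    case False
    then have "y < x" using that by (metis linorder_neqE_nat)
    then show ?thesis using sep0[of y x] that by (metis insert_commute)
  qed
  have Sset: "S = {p!(i-1), p!i, p!Suc i}" unfolding S_def using ab i by auto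
  have notS: "p!s \<notin> S" if "s < n" "s \<noteq> i-1" "s \<noteq> i" "s \<noteq> Suc i" for s
  proof
    assume "p!s \<in> S"
    then have "p!s = p!(i-1) \<or> p!s = p!i \<or> p!s = p!Suc i" using Sset by auto
    moreover have "i - 1 < n" using i by simp
    ultimately show False using that dist len i by (metis Suc_lessD nth_eq_iff_index_eq)
  qed
  have nShigh: "\<forall>s. i + 2 \<le> s \<and> s \<le> n - 1 \<longrightarrow> p!s \<notin> S"
  proof (intro allI impI)
    fix s assume "i + 2 \<le> s \<and> s \<le> n - 1"
    then have "s < n" "s \<noteq> i - 1" "s \<noteq> i" "s \<noteq> Suc i" using i by auto
    then show "p!s \<notin> S" using notS by blast
  qed
  have low: "cls (p!t) = cls (p!t')" if "t < i - 1" "t' < i - 1" for t t'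
  proof -
    have i2: "i \<ge> 2" using that by simp
    have nSlow: "\<forall>s. 0 \<le> s \<and> s \<le> i - 2 \<longrightarrow> p!s \<notin> S"
    proof (intro allI impI)
      fix s assume "0 \<le> s \<and> s \<le> i - 2"
      then have "s < n" "s \<noteq> i - 1" "s \<noteq> i" "s \<noteq> Suc i" using i i2 by auto
      then show "p!s \<notin> S" using notS by blast
    qed
    have h: "i - 2 < length p" using i len by simp
    have h2: "0 \<le> t" "t \<le> i - 2" "0 \<le> t'" "t' \<le> i - 2" using that by auto
    show ?thesis by (rule block_eq[OF sh h h2 nSlow sep])
  qed
  have high: "cls (p!t) = cls (p!t')" if "t > Suc i" "t' > Suc i" "t < n" "t' < n" for t t'
  proof -
    have h: "n - 1 < length p" using i len by simp
    have h2: "i + 2 \<le> t" "t \<le> n - 1" "i + 2 \<le> t'" "t' \<le> n - 1" using that by auto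
    show ?thesis by (rule block_eq[OF sh h h2 nShigh sep])
  qed
  obtain t1 where t1: "t1 < n" "p!t1 = 1" using pos_of[OF sh, of 1] a len by auto
  obtain t2 where t2: "t2 < n" "p!t2 = a + 1" using pos_of[OF sh, of "a+1"] a len by auto
  obtain t3 where t3: "t3 < n" "p!t3 = n - 1" using pos_of[OF sh, of "n-1"] a len by auto
  have c: "cls 1 = 0" "cls (a+1) = 1" "cls (n-1) = 2" using a unfolding cls_def by auto
  have inS: "p!(i-1) \<in> S" "p!i \<in> S" "p!Suc i \<in> S" using Sset by auto
  have nS1: "p!t1 \<notin> S" "p!t2 \<notin> S" "p!t3 \<notin> S" using a t1 t2 t3 unfolding S_def by auto
  have pos: "t \<noteq> i-1 \<and> t \<noteq> i \<and> t \<noteq> Suc i" if "p!t \<notin> S" for t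
    using that inS by blast
  have "t1 \<noteq> i-1 \<and> t1 \<noteq> i \<and> t1 \<noteq> Suc i" "t2 \<noteq> i-1 \<and> t2 \<noteq> i \<and> t2 \<noteq> Suc i"
     "t3 \<noteq> i-1 \<and> t3 \<noteq> i \<and> t3 \<noteq> Suc i"
    using pos nS1 by auto
  then have s: "t1 < i - 1 \<or> t1 > Suc i" "t2 < i - 1 \<or> t2 > Suc i" "t3 < i - 1 \<or> t3 > Suc i"
    by auto
  have d12: "\<not> (t1 < i - 1 \<and> t2 < i - 1)" "\<not> (t1 > Suc i \<and> t2 > Suc i)"
    using low[of t1 t2] high[of t1 t2] t1 t2 c by auto
  have d13: "\<not> (t1 < i - 1 \<and> t3 < i - 1)" "\<not> (t1 > Suc i \<and> t3 > Suc i)"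
    using low[of t1 t3] high[of t1 t3] t1 t3 c by auto
  have d23: "\<not> (t2 < i - 1 \<and> t3 < i - 1)" "\<not> (t2 > Suc i \<and> t3 > Suc i)"
    using low[of t2 t3] high[of t2 t3] t2 t3 c by auto
  show False using s d12 d13 d23 by blast
qed


theorem proposition2:
  fixes m :: nat
  assumes "m \<ge> 2"
  shows "\<exists>B. B \<subseteq> ck_edges (2 * m - 1) \<and> card B = m \<and>
           (\<forall>p. simple_ham_path (2 * m - 1) p \<longrightarrow> B \<inter> path_edges p \<noteq> {})"
proof -
  define n where "n = 2 * m - 1"
  define f where "f = (\<lambda>j::nat. if j = 0 then 1 else 2 * j)"
  define B where "B = (\<lambda>j. {0::nat, f j}) ` {..<m}"
  have fpos: "f j \<noteq> 0" for j unfolding f_def by auto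
  have fn: "j < m \<Longrightarrow> f j < n" for j unfolding f_def n_def using assms by auto
  have sub: "B \<subseteq> ck_edges n"
  proof
    fix e assume "e \<in> B"
    then obtain j where j: "j < m" "e = {0, f j}" unfolding B_def by auto
    have "(0::nat) < n" using assms n_def by simp
    then show "e \<in> ck_edges n" unfolding ck_edges_def mem_Collect_eq
      by (intro exI[of _ 0] exI[of _ "f j"]) (use j fpos fn in simp)
  qed
  have inj: "inj_on (\<lambda>j. {0::nat, f j}) {..<m}"
  proof (rule inj_onI)
    fix x y assume "{0::nat, f x} = {0, f y}"
    then have "f x = f y" using fpos by (metis doubleton_eq_iff)
    then show "x = y" unfolding f_def by (auto split: if_splits)
  qed
  have card: "card B = m" unfolding B_def using card_image[OF inj] by simp
  have inB: "{0, v} \<in> B" if "v < n" "v \<noteq> 0" "v = 1 \<or> even v" for v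
  proof (cases "v = 1")
    case True
    then have "{0,v} = {0, f 0}" unfolding f_def by simp
    then show ?thesis unfolding B_def by (rule image_eqI[of _ _ 0]) (use assms in simp)
  next
    case False
    then have ev: "even v" using that by simp
    then obtain j where j: "v = 2 * j" by blast
    then have "j \<noteq> 0" "j < m" using that n_def by auto
    then have "{0,v} = {0, f j}" unfolding f_def using j by simp
    then show ?thesis unfolding B_def by (rule image_eqI[of _ _ j]) (use \<open>j < m\<close> in simp)
  qed
  have main: False if sh: "simple_ham_path n p" and dis: "B \<inter> path_edges p = {}" for p
  proof -
    have len: "length p = n" using len_sh[OF sh] .
    have dist: "distinct p" using sh unfolding simple_ham_path_def by simp
    have n3: "n \<ge> 3" "odd n" using assms n_def by auto
    obtain i where i: "i < n" "p!i = 0" using pos_of[OF sh, of 0] n3 len by auto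
    have key: "\<exists>k. p!t = 2 * k + 1 \<and> k \<noteq> 0 \<and> p!t + 2 \<le> n"
      if "{0, p!t} \<in> path_edges p" "t < n" "t \<noteq> i" for t
    proof -
      have v0: "p!t \<noteq> 0" using that i dist len by (metis nth_eq_iff_index_eq)
      have vn: "p!t < n" using sh that len unfolding simple_ham_path_def
        by (metis atLeastLessThan_iff nth_mem)
      have "\<not> (p!t = 1 \<or> even (p!t))" using inB[OF vn v0] that(1) dis by blast
      then obtain k where k: "p!t = 2 * k + 1" "k \<noteq> 0" by (metis oddE One_nat_def add_0 mult_0_right)
      then show ?thesis using vn n_def by (intro exI[of _ k]) presburger
    qed
    show False
    proof (cases "i = 0")
      case True
      have e: "{0, p!1} \<in> path_edges p" using edge_in[of 0 p] i True len n3 by simp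
      obtain k where k: "p!1 = 2*k+1" "k \<noteq> 0" "p!1 + 2 \<le> n" using key[OF e] n3 True by auto
      show False
        by (rule endpoint_case[OF sh i(1) i(2), of 1 "p!1" 2 "n-1"]) (use n3 e k True in auto)
    next
      case F1: False
      show False
      proof (cases "i = n - 1")
        case True
        have e0: "{p!(n-2), p!Suc (n-2)} \<in> path_edges p" using edge_in[of "n-2" p] len n3 by simp
        have "Suc (n-2) = i" using True n3 by simp
        then have e: "{0, p!(n-2)} \<in> path_edges p" using e0 i by (simp add: insert_commute)
        obtain k where k: "p!(n-2) = 2*k+1" "k \<noteq> 0" "p!(n-2) + 2 \<le> n"
        proof -
          have "n - 2 < n" "n - 2 \<noteq> i" using n3 True by auto
          then show ?thesis using key[OF e] that by blast
        qed
        show False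
          by (rule endpoint_case[OF sh i(1) i(2), of "n-2" "p!(n-2)" 0 "n-3"]) (use n3 e k True in auto)
      next
        case False
        have ii: "0 < i" "Suc i < n" using F1 False i by auto
        have e1: "{p!(i-1), p!i} \<in> path_edges p" using edge_in[of "i-1" p] ii len by simp
        have e2: "{p!i, p!Suc i} \<in> path_edges p" using edge_in[of i p] ii len by simp
        have e1': "{0, p!(i-1)} \<in> path_edges p" using e1 i by (simp add: insert_commute)
        have e2': "{0, p!Suc i} \<in> path_edges p" using e2 i by simp
        obtain k1 where k1: "p!(i-1) = 2*k1+1" "k1 \<noteq> 0" "p!(i-1) + 2 \<le> n"
        proof -
          have "i - 1 < n" "i - 1 \<noteq> i" using ii by auto
          then show ?thesis using key[OF e1'] that by blast
        qed
        obtain k2 where k2: "p!Suc i = 2*k2+1" "k2 \<noteq> 0" "p!Suc i + 2 \<le> n"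
        proof -
          have "Suc i < n" "Suc i \<noteq> i" using ii by auto
          then show ?thesis using key[OF e2'] that by blast
        qed
        have ne: "p!(i-1) \<noteq> p!Suc i" using dist len ii by (simp add: nth_eq_iff_index_eq)
        show False
        proof (cases "k1 < k2")
          case True
          show False
            by (rule interior_case[OF sh ii i(2), of "p!(i-1)" "p!Suc i"]) (use k1 k2 True in auto)
        next
          case False
          then have "k2 < k1" using ne k1 k2 by auto
          then show False
            by (intro interior_case[OF sh ii i(2), of "p!Suc i" "p!(i-1)"]) (use k1 k2 in \<open>auto simp: insert_commute\<close>)
        qed
      qed
    qed
  qed
  show ?thesis using sub card main unfolding n_def by blast
qed

end
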